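(* Consider the weighted-median opinion dynamics on a row-stochastic influence matrix $W$ with node set $V=\{1,\dots,n\}$. Suppose the decisive graph $G_{\mathrm{decisive}}(W)$ has no globally reachable node. Then for every initial condition $x(0)\in\mathbb R^n$ whose entries are pairwise distinct, the solution $x(t)$ almost surely reaches a disagreement equilibrium in finite time.
   Context: A matrix $W=(w_{ij})_{n\times n}$ is row-stochastic if $w_{ij}\ge 0$ for all $i,j$ and $\sum_{j=1}^n w_{ij}=1$ for every $i$. Out-neighbour set: $N_i=\{j\in V: w_{ij}\ne 0\}$. A link $(i,j)$ with $j\in N_i$ is decisive if there exists $\theta\subseteq N_i$ with $j\in\theta$, $\sum_{k\in\theta}w_{ik}\ge 1/2$, and $\sum_{k\in\theta\setminus\{j\}}w_{ik}<1/2$. Otherwise the link is indecisive. $G_{\mathrm{decisive}}(W)$ is the directed graph on $V$ whose edges are exactly the decisive links $(i,j)$, directed from $i$ to $j$. A node $v$ is globally reachable if every other node has a directed path to $v$. A weighted median of $x\in\mathbb R^n$ with respect to row $i$ of $W$ is any $y\in\{x_1,\dots,x_n\}$ satisfying $\sum_{j:\,x_j<y}w_{ij}\le 1/2$ and $\sum_{j:\,x_j>y}w_{ij}\le 1/2$. $\mathrm{Med}_i(x;W)$ denotes this weighted median when it is unique. When it is not unique, $\mathrm{Med}_i(x;W)$ denotes the weighted median closest to $x_i$, which is then uniquely determined. Weighted-median opinion dynamics: given $x(0)\in\mathbb R^n$, at each time step $t+1$ ($t=0,1,2,\dots$) an index $i$ is drawn uniformly at random from $\{1,\dots,n\}$,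 independently of the past. Then $x_i(t+1)=\mathrm{Med}_i(x(t);W)$ and $x_j(t+1)=x_j(t)$ for $j\ne i$. An equilibrium is a vector $x^*$ with $x^*_i=\mathrm{Med}_i(x^*;W)$ for all $i$. A disagreement equilibrium is an equilibrium whose entries are not all equal. *)

theory Defs
  imports "HOL-Probability.Probability"
begin

text \<open>Nodes are the elements of a finite type 'n (V = UNIV). Matrices are functions
'n => 'n => real, opinion vectors are functions 'n => real.\<close>

definition row_stochastic :: "('n::finite \<Rightarrow> 'n \<Rightarrow> real) \<Rightarrow> bool" where
  "row_stochastic W \<longleftrightarrow> (\<forall>i j. W i j \<ge> 0) \<and> (\<forall>i. (\<Sum>j\<in>UNIV. W i j) = 1)"

definition out_nbrs :: "('n::finite \<Rightarrow> 'n \<Rightarrow> real) \<Rightarrow> 'n \<Rightarrow> 'n set" where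
  "out_nbrs W i = {j. W i j \<noteq> 0}"

definition decisive_link :: "('n::finite \<Rightarrow> 'n \<Rightarrow> real) \<Rightarrow> 'n \<Rightarrow> 'n \<Rightarrow> bool" where
  "decisive_link W i j \<longleftrightarrow> j \<in> out_nbrs W i \<and>
     (\<exists>\<theta>. \<theta> \<subseteq> out_nbrs W i \<and> j \<in> \<theta> \<and> (\<Sum>k\<in>\<theta>. W i k) \<ge> 1/2
          \<and> (\<Sum>k\<in>\<theta> - {j}. W i k) < 1/2)"

definition G_decisive :: "('n::finite \<Rightarrow> 'n \<Rightarrow> real) \<Rightarrow> ('n \<times> 'n) set" where
  "G_decisive W = {(i, j). decisive_link W i j}"

definition globally_reachable :: "('n \<times> 'n) set \<Rightarrow> 'n \<Rightarrow> bool" where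
  "globally_reachable E v \<longleftrightarrow> (\<forall>u. u \<noteq> v \<longrightarrow> (u, v) \<in> E\<^sup>+)"

definition is_wmedian :: "('n::finite \<Rightarrow> 'n \<Rightarrow> real) \<Rightarrow> 'n \<Rightarrow> ('n \<Rightarrow> real) \<Rightarrow> real \<Rightarrow> bool" where
  "is_wmedian W i x y \<longleftrightarrow> y \<in> range x \<and>
     (\<Sum>j\<in>{j. x j < y}. W i j) \<le> 1/2 \<and> (\<Sum>j\<in>{j. x j > y}. W i j) \<le> 1/2"

definition Med :: "('n::finite \<Rightarrow> 'n \<Rightarrow> real) \<Rightarrow> 'n \<Rightarrow> ('n \<Rightarrow> real) \<Rightarrow> real" where
  "Med W i x = (if \<exists>!y. is_wmedian W i x y then (THE y. is_wmedian W i x y)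
     else (THE y. is_wmedian W i x y \<and>
             (\<forall>z. is_wmedian W i x z \<longrightarrow> \<bar>y - x i\<bar> \<le> \<bar>z - x i\<bar>)))"

primrec traj :: "('n::finite \<Rightarrow> 'n \<Rightarrow> real) \<Rightarrow> ('n \<Rightarrow> real) \<Rightarrow> 'n stream \<Rightarrow> nat \<Rightarrow> ('n \<Rightarrow> real)" where
  "traj W x0 \<omega> 0 = x0"
| "traj W x0 \<omega> (Suc t) = (let x = traj W x0 \<omega> t; i = \<omega> !! t in x(i := Med W i x))"

definition equilibrium :: "('n::finite \<Rightarrow> 'n \<Rightarrow> real) \<Rightarrow> ('n \<Rightarrow> real) \<Rightarrow> bool" where
  "equilibrium W x \<longleftrightarrow> (\<forall>i. x i = Med W i x)"

definition disagreement_equilibrium :: "('n::finite \<Rightarrow> 'n \<Rightarrow> real) \<Rightarrow> ('n \<Rightarrow> real) \<Rightarrow> bool" where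
  "disagreement_equilibrium W x \<longleftrightarrow> equilibrium W x \<and> (\<exists>i j. x i \<noteq> x j)"

definition index_process :: "'n::finite stream measure" where
  "index_process = stream_space (measure_pmf (pmf_of_set (UNIV :: 'n set)))"

end

theory Submission
  imports Defs
begin


definition lo :: "('n::finite \<Rightarrow> 'n \<Rightarrow> real) \<Rightarrow> 'n \<Rightarrow> ('n \<Rightarrow> real) \<Rightarrow> real" where
  "lo W i x = Min {y \<in> range x. (\<Sum>j\<in>{j. x j \<le> y}. W i j) \<ge> 1/2}"

definition hi :: "('n::finite \<Rightarrow> 'n \<Rightarrow> real) \<Rightarrow> 'n \<Rightarrow> ('n \<Rightarrow> real) \<Rightarrow> real" where
  "hi W i x = Max {y \<in> range x. (\<Sum>j\<in>{j. x j \<ge> y}. W i j) \<ge> 1/2}"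

lemma clamp1: "l \<le> (h::real) \<Longrightarrow> l \<le> z \<Longrightarrow> z \<le> h \<Longrightarrow> \<bar>max l (min a h) - a\<bar> \<le> \<bar>z - a\<bar>"
  by (simp add: max_def min_def abs_if)
lemma clamp2: "l \<le> (h::real) \<Longrightarrow> l \<le> d \<Longrightarrow> d \<le> h \<Longrightarrow> \<bar>d - a\<bar> \<le> \<bar>max l (min a h) - a\<bar> \<Longrightarrow> d = max l (min a h)"
  by (simp add: max_def min_def abs_if split: if_splits)

context
  fixes W :: "'n::finite \<Rightarrow> 'n \<Rightarrow> real"
  assumes rs: "row_stochastic W"
begin

lemma nonneg: "W i j \<ge> 0" using rs unfolding row_stochastic_def by auto
lemma sum1: "sum (W i) UNIV = 1" using rs unfolding row_stochastic_def by auto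

lemma compl: "sum (W i) {j. P j} + sum (W i) {j. \<not> P j} = 1"
proof -
  have "sum (W i) ({j. P j} \<union> {j. \<not> P j}) = sum (W i) {j. P j} + sum (W i) {j. \<not> P j}"
    by (rule sum.union_disjoint) auto
  moreover have "{j. P j} \<union> {j. \<not> P j} = UNIV" by auto
  ultimately show ?thesis using sum1 by simp
qed

lemma compl_lt: "sum (W i) {j. (x j::real) < y} + sum (W i) {j. x j \<ge> y} = 1"
proof -
  have "{j. \<not> x j < y} = {j. x j \<ge> y}" by auto
  thus ?thesis using compl[of i "\<lambda>j. x j < y"] by simp
qed
lemma compl_le: "sum (W i) {j. (x j::real) \<le> y} + sum (W i) {j. x j > y} = 1"
proof -
  have "{j. \<not> x j \<le> y} = {j. x j > y}" by auto
  thus ?thesis using compl[of i "\<lambda>j. x j \<le> y"] by simp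
qed

lemma smono: "A \<subseteq> B \<Longrightarrow> sum (W i) A \<le> sum (W i) B"
  by (rule sum_mono2) (auto simp: nonneg)

lemma lo_set: "finite {y \<in> range (x::'n\<Rightarrow>real). (\<Sum>j\<in>{j. x j \<le> y}. W i j) \<ge> 1/2}"
     "{y \<in> range x. (\<Sum>j\<in>{j. x j \<le> y}. W i j) \<ge> 1/2} \<noteq> {}"
proof -
  show "finite {y \<in> range x. (\<Sum>j\<in>{j. x j \<le> y}. W i j) \<ge> 1/2}" by simp
  have "Max (range x) \<in> range x" by (rule Max_in) auto
  moreover have "{j. x j \<le> Max (range x)} = UNIV" by auto
  ultimately have "Max (range x) \<in> {y \<in> range x. (\<Sum>j\<in>{j. x j \<le> y}. W i j) \<ge> 1/2}"
    using sum1[of i] by simp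
  thus "{y \<in> range x. (\<Sum>j\<in>{j. x j \<le> y}. W i j) \<ge> 1/2} \<noteq> {}" by blast
qed

lemma hi_set: "finite {y \<in> range (x::'n\<Rightarrow>real). (\<Sum>j\<in>{j. x j \<ge> y}. W i j) \<ge> 1/2}"
     "{y \<in> range x. (\<Sum>j\<in>{j. x j \<ge> y}. W i j) \<ge> 1/2} \<noteq> {}"
proof -
  show "finite {y \<in> range x. (\<Sum>j\<in>{j. x j \<ge> y}. W i j) \<ge> 1/2}" by simp
  have "Min (range x) \<in> range x" by (rule Min_in) auto
  moreover have "{j. x j \<ge> Min (range x)} = UNIV" by auto
  ultimately have "Min (range x) \<in> {y \<in> range x. (\<Sum>j\<in>{j. x j \<ge> y}. W i j) \<ge> 1/2}"
    using sum1[of i] by simp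
  thus "{y \<in> range x. (\<Sum>j\<in>{j. x j \<ge> y}. W i j) \<ge> 1/2} \<noteq> {}" by blast
qed

lemma lo_in: "lo W i x \<in> range x" "sum (W i) {j. x j \<le> lo W i x} \<ge> 1/2"
  using Min_in[OF lo_set] unfolding lo_def by auto

lemma hi_in: "hi W i x \<in> range x" "sum (W i) {j. x j \<ge> hi W i x} \<ge> 1/2"
  using Max_in[OF hi_set] unfolding hi_def by auto

lemma lo_le: "y \<in> range x \<Longrightarrow> sum (W i) {j. x j \<le> y} \<ge> 1/2 \<Longrightarrow> lo W i x \<le> y"
  unfolding lo_def by (rule Min_le) auto

lemma hi_ge: "y \<in> range x \<Longrightarrow> sum (W i) {j. x j \<ge> y} \<ge> 1/2 \<Longrightarrow> y \<le> hi W i x"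
  unfolding hi_def by (rule Max_ge) auto

lemma lo_lt: "sum (W i) {j. x j < lo W i x} < 1/2"
proof (rule ccontr)
  assume a: "\<not> ?thesis"
  let ?B = "x ` {j. x j < lo W i x}"
  have ne: "{j. x j < lo W i x} \<noteq> {}"
  proof
    assume e: "{j. x j < lo W i x} = {}"
    hence "sum (W i) {j. x j < lo W i x} = 0" by (simp only: sum.empty)
    with a show False by simp
  qed
  hence "?B \<noteq> {}" by auto
  hence y0: "Max ?B \<in> ?B" by (intro Max_in) auto
  have eq: "{j. x j \<le> Max ?B} = {j. x j < lo W i x}"
  proof
    show "{j. x j \<le> Max ?B} \<subseteq> {j. x j < lo W i x}" using y0 by auto
    show "{j. x j < lo W i x} \<subseteq> {j. x j \<le> Max ?B}" by (auto intro: Max_ge)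
  qed
  have "lo W i x \<le> Max ?B" using a eq y0 by (intro lo_le) auto
  thus False using y0 by auto
qed

lemma hi_gt: "sum (W i) {j. x j > hi W i x} < 1/2"
proof (rule ccontr)
  assume a: "\<not> ?thesis"
  let ?B = "x ` {j. x j > hi W i x}"
  have ne: "{j. x j > hi W i x} \<noteq> {}"
  proof
    assume e: "{j. x j > hi W i x} = {}"
    hence "sum (W i) {j. x j > hi W i x} = 0" by (simp only: sum.empty)
    with a show False by simp
  qed
  hence "?B \<noteq> {}" by auto
  hence y0: "Min ?B \<in> ?B" by (intro Min_in) auto
  have eq: "{j. x j \<ge> Min ?B} = {j. x j > hi W i x}"
  proof
    show "{j. x j \<ge> Min ?B} \<subseteq> {j. x j > hi W i x}" using y0 by auto
    show "{j. x j > hi W i x} \<subseteq> {j. x j \<ge> Min ?B}" by (auto intro: Min_le)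
  qed
  have "Min ?B \<le> hi W i x" using a eq y0 by (intro hi_ge) auto
  thus False using y0 by auto
qed

lemma lo_le_hi: "lo W i x \<le> hi W i x"
  using lo_lt[of i x] compl_lt[of i x "lo W i x"] lo_in[of i x] by (intro hi_ge) auto

lemma median_iff: "is_wmedian W i x y \<longleftrightarrow> y \<in> range x \<and> lo W i x \<le> y \<and> y \<le> hi W i x"
proof
  assume m: "is_wmedian W i x y"
  hence r: "y \<in> range x" and a: "sum (W i) {j. x j < y} \<le> 1/2" and b: "sum (W i) {j. x j > y} \<le> 1/2"
    unfolding is_wmedian_def by auto
  have "lo W i x \<le> y" using compl_le[of i x y] b r by (intro lo_le) auto
  moreover have "y \<le> hi W i x" using compl_lt[of i x y] a r by (intro hi_ge) auto
  ultimately show "y \<in> range x \<and> lo W i x \<le> y \<and> y \<le> hi W i x" using r by auto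
next
  assume "y \<in> range x \<and> lo W i x \<le> y \<and> y \<le> hi W i x"
  hence r: "y \<in> range x" and l: "lo W i x \<le> y" and h: "y \<le> hi W i x" by auto
  have "sum (W i) {j. x j \<le> lo W i x} \<le> sum (W i) {j. x j \<le> y}" using l by (intro smono) auto
  hence 1: "sum (W i) {j. x j > y} \<le> 1/2" using lo_in(2)[of i x] compl_le[of i x y] by linarith
  have "sum (W i) {j. x j \<ge> hi W i x} \<le> sum (W i) {j. x j \<ge> y}" using h by (intro smono) auto
  hence 2: "sum (W i) {j. x j < y} \<le> 1/2" using hi_in(2)[of i x] compl_lt[of i x y] by linarith
  show "is_wmedian W i x y" unfolding is_wmedian_def using r 1 2 by auto
qed

lemma Med_eq: "Med W i x = max (lo W i x) (min (x i) (hi W i x))"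
proof -
  let ?l = "lo W i x" and ?h = "hi W i x" and ?c = "max (lo W i x) (min (x i) (hi W i x))"
  have lh: "?l \<le> ?h" by (rule lo_le_hi)
  have cr: "?c \<in> range x"
  proof -
    have "?c = ?l \<or> ?c = x i \<or> ?c = ?h" by linarith
    thus ?thesis using lo_in(1)[of i x] hi_in(1)[of i x] rangeI[of x i] by (elim disjE) simp_all
  qed
  have cm: "is_wmedian W i x ?c" unfolding median_iff using cr lh by simp
  have cl: "\<forall>z. is_wmedian W i x z \<longrightarrow> \<bar>?c - x i\<bar> \<le> \<bar>z - x i\<bar>"
    unfolding median_iff using lh clamp1 by blast
  have un: "d = ?c" if "is_wmedian W i x d \<and> (\<forall>z. is_wmedian W i x z \<longrightarrow> \<bar>d - x i\<bar> \<le> \<bar>z - x i\<bar>)" for d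
  proof -
    have 1: "\<bar>d - x i\<bar> \<le> \<bar>?c - x i\<bar>" using that cm by blast
    have "is_wmedian W i x d" using that by blast
    hence "?l \<le> d" "d \<le> ?h" unfolding median_iff by blast+
    thus ?thesis using lh clamp2 1 by blast
  qed
  show ?thesis
  proof (cases "\<exists>!y. is_wmedian W i x y")
    case True
    have "Med W i x = (THE y. is_wmedian W i x y)" unfolding Med_def by (rule if_P[OF True])
    thus ?thesis using the1_equality[OF True cm] by simp
  next
    case False
    have "Med W i x = (THE y. is_wmedian W i x y \<and> (\<forall>z. is_wmedian W i x z \<longrightarrow> \<bar>y - x i\<bar> \<le> \<bar>z - x i\<bar>))"
      unfolding Med_def by (rule if_not_P[OF False])
    also have "\<dots> = ?c"
    proof (rule the_equality)
      show "is_wmedian W i x ?c \<and> (\<forall>z. is_wmedian W i x z \<longrightarrow> \<bar>?c - x i\<bar> \<le> \<bar>z - x i\<bar>)"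
        using cm cl by blast
      show "\<And>y. is_wmedian W i x y \<and> (\<forall>z. is_wmedian W i x z \<longrightarrow> \<bar>y - x i\<bar> \<le> \<bar>z - x i\<bar>) \<Longrightarrow> y = ?c"
        using un by blast
    qed
    finally show ?thesis .
  qed
qed

end



context
  fixes W :: "'n::finite \<Rightarrow> 'n \<Rightarrow> real"
  assumes rs: "row_stochastic W"
begin

lemma lo_mono:
  fixes x x' :: "'n \<Rightarrow> real"
  assumes le: "\<And>k. x k \<le> x' k"
  shows "lo W i x \<le> lo W i x'"
proof -
  let ?m = "lo W i x'"
  obtain j0 where j0: "x' j0 = ?m" using lo_in(1)[OF rs, of i x'] by auto
  let ?B = "x ` {k. x k \<le> ?m}"
  have "x j0 \<le> ?m" using le[of j0] j0 by simp
  hence "?B \<noteq> {}" by auto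
  hence y: "Max ?B \<in> ?B" by (intro Max_in) auto
  have eq: "{k. x k \<le> Max ?B} = {k. x k \<le> ?m}"
  proof
    show "{k. x k \<le> Max ?B} \<subseteq> {k. x k \<le> ?m}" using y by auto
    show "{k. x k \<le> ?m} \<subseteq> {k. x k \<le> Max ?B}" by (auto intro: Max_ge)
  qed
  have "{k. x' k \<le> ?m} \<subseteq> {k. x k \<le> ?m}" using le by (auto intro: order_trans)
  hence "sum (W i) {k. x' k \<le> ?m} \<le> sum (W i) {k. x k \<le> ?m}" by (rule smono[OF rs])
  moreover have "sum (W i) {k. x k \<le> Max ?B} = sum (W i) {k. x k \<le> ?m}" using eq by simp
  ultimately have "sum (W i) {k. x k \<le> Max ?B} \<ge> 1/2" using lo_in(2)[OF rs, of i x'] by linarith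
  hence "lo W i x \<le> Max ?B" using y by (intro lo_le[OF rs]) auto
  thus ?thesis using y by auto
qed

lemma hi_mono:
  fixes x x' :: "'n \<Rightarrow> real"
  assumes le: "\<And>k. x k \<le> x' k"
  shows "hi W i x \<le> hi W i x'"
proof -
  let ?m = "hi W i x"
  obtain j0 where j0: "x j0 = ?m" using hi_in(1)[OF rs, of i x] by auto
  let ?B = "x' ` {k. x' k \<ge> ?m}"
  have "x' j0 \<ge> ?m" using le[of j0] j0 by simp
  hence "?B \<noteq> {}" by auto
  hence y: "Min ?B \<in> ?B" by (intro Min_in) auto
  have eq: "{k. x' k \<ge> Min ?B} = {k. x' k \<ge> ?m}"
  proof
    show "{k. x' k \<ge> Min ?B} \<subseteq> {k. x' k \<ge> ?m}" using y by auto
    show "{k. x' k \<ge> ?m} \<subseteq> {k. x' k \<ge> Min ?B}" by (auto intro: Min_le)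
  qed
  have "{k. x k \<ge> ?m} \<subseteq> {k. x' k \<ge> ?m}" using le by (auto intro: order_trans)
  hence "sum (W i) {k. x k \<ge> ?m} \<le> sum (W i) {k. x' k \<ge> ?m}" by (rule smono[OF rs])
  moreover have "sum (W i) {k. x' k \<ge> Min ?B} = sum (W i) {k. x' k \<ge> ?m}" using eq by simp
  ultimately have "sum (W i) {k. x' k \<ge> Min ?B} \<ge> 1/2" using hi_in(2)[OF rs, of i x] by linarith
  hence "Min ?B \<le> hi W i x'" using y by (intro hi_ge[OF rs]) auto
  thus ?thesis using y by auto
qed

lemma Med_mono:
  fixes x x' :: "'n \<Rightarrow> real"
  assumes le: "\<And>k. x k \<le> x' k"
  shows "Med W i x \<le> Med W i x'"
  unfolding Med_eq[OF rs] using lo_mono[of x x', OF le, of i] hi_mono[of x x', OF le, of i] le[of i]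
  by (intro max.mono min.mono) auto

lemma Med_range: "Med W i x \<in> range x"
proof -
  have "Med W i x = lo W i x \<or> Med W i x = x i \<or> Med W i x = hi W i x"
    unfolding Med_eq[OF rs] by linarith
  thus ?thesis using lo_in(1)[OF rs, of i x] hi_in(1)[OF rs, of i x] rangeI[of x i] by (elim disjE) simp_all
qed

lemma sum_nbrs: "sum (W i) (A \<inter> out_nbrs W i) = sum (W i) A"
  by (rule sum.mono_neutral_left) (auto simp: out_nbrs_def)

lemma lo_decisive: "\<exists>j. decisive_link W i j \<and> x j = lo W i x"
proof -
  let ?l = "lo W i x" and ?N = "out_nbrs W i"
  define P where "P \<theta> \<longleftrightarrow> \<theta> \<subseteq> ?N \<inter> {k. x k \<le> ?l} \<and> ?N \<inter> {k. x k < ?l} \<subseteq> \<theta> \<and> sum (W i) \<theta> \<ge> 1/2" for \<theta>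
  have "P ({k. x k \<le> ?l} \<inter> ?N)" unfolding P_def sum_nbrs using lo_in(2)[OF rs, of i x] by auto
  then obtain \<theta> where th: "P \<theta>" and mn: "\<forall>\<theta>'. P \<theta>' \<longrightarrow> card \<theta> \<le> card \<theta>'"
    using ex_has_least_nat[of P _ card] by blast
  have "\<theta> \<noteq> ?N \<inter> {k. x k < ?l}"
  proof
    assume "\<theta> = ?N \<inter> {k. x k < ?l}"
    hence "sum (W i) \<theta> = sum (W i) {k. x k < ?l}" using sum_nbrs[of i "{k. x k < ?l}"] by (simp add: Int_commute)
    thus False using th lo_lt[OF rs, of i x] unfolding P_def by linarith
  qed
  then obtain j where j: "j \<in> \<theta>" "\<not> x j < ?l" using th unfolding P_def by blast
  hence xj: "x j = ?l" "j \<in> ?N" using th unfolding P_def by auto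
  have "card (\<theta> - {j}) < card \<theta>" using j(1) by (intro card_Diff1_less) auto
  hence "\<not> P (\<theta> - {j})" using mn by fastforce
  hence lt: "sum (W i) (\<theta> - {j}) < 1/2" using th j unfolding P_def by auto
  have "decisive_link W i j" unfolding decisive_link_def
    using xj j(1) lt th unfolding P_def by blast
  thus ?thesis using xj by blast
qed

lemma hi_decisive: "\<exists>j. decisive_link W i j \<and> x j = hi W i x"
proof -
  let ?l = "hi W i x" and ?N = "out_nbrs W i"
  define P where "P \<theta> \<longleftrightarrow> \<theta> \<subseteq> ?N \<inter> {k. x k \<ge> ?l} \<and> ?N \<inter> {k. x k > ?l} \<subseteq> \<theta> \<and> sum (W i) \<theta> \<ge> 1/2" for \<theta>
  have "P ({k. x k \<ge> ?l} \<inter> ?N)" unfolding P_def sum_nbrs using hi_in(2)[OF rs, of i x] by auto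
  then obtain \<theta> where th: "P \<theta>" and mn: "\<forall>\<theta>'. P \<theta>' \<longrightarrow> card \<theta> \<le> card \<theta>'"
    using ex_has_least_nat[of P _ card] by blast
  have "\<theta> \<noteq> ?N \<inter> {k. x k > ?l}"
  proof
    assume "\<theta> = ?N \<inter> {k. x k > ?l}"
    hence "sum (W i) \<theta> = sum (W i) {k. x k > ?l}" using sum_nbrs[of i "{k. x k > ?l}"] by (simp add: Int_commute)
    thus False using th hi_gt[OF rs, of i x] unfolding P_def by linarith
  qed
  then obtain j where j: "j \<in> \<theta>" "\<not> x j > ?l" using th unfolding P_def by blast
  hence xj: "x j = ?l" "j \<in> ?N" using th unfolding P_def by auto
  have "card (\<theta> - {j}) < card \<theta>" using j(1) by (intro card_Diff1_less) auto
  hence "\<not> P (\<theta> - {j})" using mn by fastforce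
  hence lt: "sum (W i) (\<theta> - {j}) < 1/2" using th j unfolding P_def by auto
  have "decisive_link W i j" unfolding decisive_link_def
    using xj j(1) lt th unfolding P_def by blast
  thus ?thesis using xj by blast
qed

lemma Med_decisive: "Med W i x = x i \<or> (\<exists>j. decisive_link W i j \<and> Med W i x = x j)"
proof -
  have "Med W i x = lo W i x \<or> Med W i x = x i \<or> Med W i x = hi W i x"
    unfolding Med_eq[OF rs] by linarith
  moreover obtain j1 where j1: "decisive_link W i j1" "x j1 = lo W i x" using lo_decisive by blast
  moreover obtain j2 where j2: "decisive_link W i j2" "x j2 = hi W i x" using hi_decisive by blast
  ultimately show ?thesis
  proof (elim disjE)
    assume "Med W i x = lo W i x" thus ?thesis using j1 by (intro disjI2 exI[of _ j1]) simp
  next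
    assume "Med W i x = hi W i x" thus ?thesis using j2 by (intro disjI2 exI[of _ j2]) simp
  qed simp
qed

end



definition step :: "('n::finite \<Rightarrow> 'n \<Rightarrow> real) \<Rightarrow> ('n \<Rightarrow> real) \<Rightarrow> 'n \<Rightarrow> ('n \<Rightarrow> real)" where
  "step W x i = x(i := Med W i x)"

lemma traj_Suc': "traj W x0 \<omega> (Suc t) = step W (traj W x0 \<omega> t) (\<omega> !! t)"
  by (simp add: Let_def step_def)

lemma traj_shift:
  "stake (length w) (sdrop t \<omega>) = w \<Longrightarrow> traj W x0 \<omega> (t + length w) = foldl (step W) (traj W x0 \<omega> t) w"
proof (induction w arbitrary: t)
  case Nil then show ?case by simp
next
  case (Cons a w)
  have a: "\<omega> !! t = a" and w: "stake (length w) (sdrop (Suc t) \<omega>) = w"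
    using Cons.prems by (auto simp: sdrop_snth) 
  have "traj W x0 \<omega> (t + length (a # w)) = traj W x0 \<omega> (Suc t + length w)" by simp
  also have "\<dots> = foldl (step W) (traj W x0 \<omega> (Suc t)) w" using Cons.IH[OF w] .
  finally show ?case using a by (simp add: traj_Suc' del: traj.simps)
qed

context
  fixes W :: "'n::finite \<Rightarrow> 'n \<Rightarrow> real"
  assumes rs: "row_stochastic W"
begin

lemma step_range: "range (step W x i) \<subseteq> range x"
  using Med_range[OF rs, of i x] by (auto simp: step_def)

lemma fold_range: "range (foldl (step W) x ws) \<subseteq> range x"
proof (induction ws arbitrary: x)
  case Nil then show ?case by simp
next
  case (Cons a ws) then show ?case using order_trans[OF Cons.IH[of "step W x a"] step_range[of x a]] by simp
qed

lemma traj_range: "range (traj W x0 \<omega> t) \<subseteq> range x0"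
proof (induction t)
  case 0 then show ?case by simp
next
  case (Suc t) then show ?case using step_range by (simp add: traj_Suc' del: traj.simps) blast
qed

lemma traj_vals: "traj W x0 \<omega> t k \<in> x0 ` ((G_decisive W)\<^sup>* `` {k})"
proof (induction t arbitrary: k)
  case 0 then show ?case by auto
next
  case (Suc t)
  let ?x = "traj W x0 \<omega> t" and ?i = "\<omega> !! t" and ?R = "G_decisive W"
  show ?case
  proof (cases "k = ?i")
    case False then show ?thesis using Suc.IH[of k] by (simp add: traj_Suc' step_def del: traj.simps)
  next
    case True
    have v: "traj W x0 \<omega> (Suc t) k = Med W ?i ?x" using True by (simp add: traj_Suc' step_def del: traj.simps)
    from Med_decisive[OF rs, of ?i ?x] show ?thesis
    proof
      assume "Med W ?i ?x = ?x ?i" thus ?thesis using v Suc.IH[of k] True by simp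
    next
      assume "\<exists>j. decisive_link W ?i j \<and> Med W ?i ?x = ?x j"
      then obtain j where j: "decisive_link W ?i j" "Med W ?i ?x = ?x j" by blast
      have ij: "(k, j) \<in> ?R" using j True by (simp add: G_decisive_def)
      have "?R\<^sup>* `` {j} \<subseteq> ?R\<^sup>* `` {k}" using ij by (auto intro: converse_rtrancl_into_rtrancl)
      thus ?thesis using Suc.IH[of j] v j(2) by auto
    qed
  qed
qed

lemma step_le: "Med W k x \<le> x k \<Longrightarrow> step W x k j \<le> x j"
  by (simp add: step_def)

lemma up:
  assumes "finite V"
  shows "range x \<subseteq> V \<Longrightarrow> \<exists>ws. (\<forall>k. Med W k (foldl (step W) x ws) \<le> foldl (step W) x ws k)"
proof (induction "\<Sum>k\<in>UNIV. card {v\<in>V. x k < v}" arbitrary: x rule: less_induct)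
  case less
  show ?case
  proof (cases "\<forall>k. Med W k x \<le> x k")
    case True
    then show ?thesis by (intro exI[of _ "[]"]) simp
  next
    case False
    then obtain k where k: "x k < Med W k x" by (auto simp: not_le)
    let ?x' = "step W x k"
    have r: "range ?x' \<subseteq> V" using step_range[of x k] less.prems by blast
    have mV: "Med W k x \<in> V" using Med_range[OF rs, of k x] less.prems by blast
    have "(\<Sum>j\<in>UNIV. card {v\<in>V. ?x' j < v}) < (\<Sum>j\<in>UNIV. card {v\<in>V. x j < v})"
    proof (rule sum_strict_mono_ex1)
      show "\<forall>j\<in>UNIV. card {v\<in>V. ?x' j < v} \<le> card {v\<in>V. x j < v}"
      proof
        fix j :: 'n
        have "{v\<in>V. ?x' j < v} \<subseteq> {v\<in>V. x j < v}" using k by (auto simp: step_def)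
        thus "card {v\<in>V. ?x' j < v} \<le> card {v\<in>V. x j < v}" using assms by (intro card_mono) auto
      qed
      have "{v\<in>V. ?x' k < v} \<subset> {v\<in>V. x k < v}" using k mV by (auto simp: step_def)
      hence "card {v\<in>V. ?x' k < v} < card {v\<in>V. x k < v}" using assms by (intro psubset_card_mono) auto
      thus "\<exists>j\<in>UNIV. card {v\<in>V. ?x' j < v} < card {v\<in>V. x j < v}" by blast
    qed simp
    from less.hyps[OF this r] obtain ws where
      "\<forall>j. Med W j (foldl (step W) ?x' ws) \<le> foldl (step W) ?x' ws j" by blast
    thus ?thesis by (intro exI[of _ "k # ws"]) simp
  qed
qed

lemma down:
  assumes "finite V"
  shows "range x \<subseteq> V \<Longrightarrow> \<forall>k. Med W k x \<le> x k \<Longrightarrow> \<exists>ws. equilibrium W (foldl (step W) x ws)"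
proof (induction "\<Sum>k\<in>UNIV. card {v\<in>V. v < x k}" arbitrary: x rule: less_induct)
  case less
  show ?case
  proof (cases "\<forall>k. Med W k x = x k")
    case True
    then show ?thesis by (intro exI[of _ "[]"]) (simp add: equilibrium_def)
  next
    case False
    then obtain k where k: "Med W k x < x k" using less.prems(2) by (metis order.not_eq_order_implies_strict)
    let ?x' = "step W x k"
    have r: "range ?x' \<subseteq> V" using step_range[of x k] less.prems by blast
    have mV: "Med W k x \<in> V" using Med_range[OF rs, of k x] less.prems by blast
    have le: "\<And>j. ?x' j \<le> x j" using k by (simp add: step_def)
    have inv: "\<forall>j. Med W j ?x' \<le> ?x' j"
    proof
      fix j
      have "Med W j ?x' \<le> Med W j x" by (rule Med_mono[OF rs]) (use le in simp)
      thus "Med W j ?x' \<le> ?x' j" using less.prems(2)[rule_format, of j] by (cases "j = k") (auto simp: step_def)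
    qed
    have "(\<Sum>j\<in>UNIV. card {v\<in>V. v < ?x' j}) < (\<Sum>j\<in>UNIV. card {v\<in>V. v < x j})"
    proof (rule sum_strict_mono_ex1)
      show "\<forall>j\<in>UNIV. card {v\<in>V. v < ?x' j} \<le> card {v\<in>V. v < x j}"
      proof
        fix j :: 'n
        have "{v\<in>V. v < ?x' j} \<subseteq> {v\<in>V. v < x j}" using le[of j] by auto
        thus "card {v\<in>V. v < ?x' j} \<le> card {v\<in>V. v < x j}" using assms by (intro card_mono) auto
      qed
      have "{v\<in>V. v < ?x' k} \<subset> {v\<in>V. v < x k}" using k mV by (auto simp: step_def)
      hence "card {v\<in>V. v < ?x' k} < card {v\<in>V. v < x k}" using assms by (intro psubset_card_mono) auto
      thus "\<exists>j\<in>UNIV. card {v\<in>V. v < ?x' j} < card {v\<in>V. v < x j}" by blast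
    qed simp
    from less.hyps[OF this r inv] obtain ws where
      "equilibrium W (foldl (step W) ?x' ws)" by blast
    thus ?thesis by (intro exI[of _ "k # ws"]) simp
  qed
qed

lemma reach_eq: "\<exists>ws. equilibrium W (foldl (step W) x ws)"
proof -
  obtain ws1 where 1: "\<forall>k. Med W k (foldl (step W) x ws1) \<le> foldl (step W) x ws1 k"
    using up[of "range x" x] by auto
  have "range (foldl (step W) x ws1) \<subseteq> range x" by (rule fold_range)
  then obtain ws2 where "equilibrium W (foldl (step W) (foldl (step W) x ws1) ws2)"
    using down[of "range x" "foldl (step W) x ws1"] 1 by auto
  thus ?thesis by (intro exI[of _ "ws1 @ ws2"]) simp
qed

lemma eq_absorb: "equilibrium W x \<Longrightarrow> foldl (step W) x ws = x"
proof (induction ws)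
  case Nil then show ?case by simp
next
  case (Cons a ws)
  have "step W x a = x" using Cons.prems by (auto simp: step_def equilibrium_def)
  then show ?case using Cons by simp
qed

lemma universal_word: "finite F \<Longrightarrow> \<exists>w. \<forall>s\<in>F. equilibrium W (foldl (step W) s w)"
proof (induction F rule: finite_induct)
  case empty then show ?case by simp
next
  case (insert s F)
  then obtain w where w: "\<forall>s\<in>F. equilibrium W (foldl (step W) s w)" by blast
  obtain v where v: "equilibrium W (foldl (step W) (foldl (step W) s w) v)" using reach_eq by blast
  have "\<forall>s'\<in>insert s F. equilibrium W (foldl (step W) s' (w @ v))"
    using w v eq_absorb by auto
  thus ?case by blast
qed

end

lemma sink_exists:
  fixes R :: "('n::finite \<times> 'n) set"
  shows "\<exists>u'. (u, u') \<in> R\<^sup>* \<and> (\<forall>w. (u', w) \<in> R\<^sup>* \<longrightarrow> (w, u') \<in> R\<^sup>*)"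
proof -
  obtain u' where u': "(u, u') \<in> R\<^sup>*" and mn: "\<forall>y. (u, y) \<in> R\<^sup>* \<longrightarrow> card (R\<^sup>* `` {u'}) \<le> card (R\<^sup>* `` {y})"
    using ex_has_least_nat[of "\<lambda>y. (u, y) \<in> R\<^sup>*" u "\<lambda>y. card (R\<^sup>* `` {y})"] by auto
  have "(w, u') \<in> R\<^sup>*" if w: "(u', w) \<in> R\<^sup>*" for w
  proof -
    have sub: "R\<^sup>* `` {w} \<subseteq> R\<^sup>* `` {u'}" using w by (auto intro: rtrancl_trans)
    have "card (R\<^sup>* `` {u'}) \<le> card (R\<^sup>* `` {w})" using mn u' w by (meson rtrancl_trans)
    hence "R\<^sup>* `` {w} = R\<^sup>* `` {u'}" using sub by (intro card_seteq) auto
    moreover have "u' \<in> R\<^sup>* `` {u'}" by simp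
    ultimately show ?thesis by auto
  qed
  thus ?thesis using u' by blast
qed

lemma disjoint_reach:
  fixes R :: "('n::finite \<times> 'n) set"
  assumes "\<forall>v. \<not> globally_reachable R v"
  shows "\<exists>v u'. R\<^sup>* `` {v} \<inter> R\<^sup>* `` {u'} = {}"
proof -
  obtain v where v: "\<forall>w. (v, w) \<in> R\<^sup>* \<longrightarrow> (w, v) \<in> R\<^sup>*" using sink_exists[of undefined R] by blast
  obtain u where u: "u \<noteq> v" "(u, v) \<notin> R\<^sup>+" using assms unfolding globally_reachable_def by blast
  have nu: "(u, v) \<notin> R\<^sup>*" using u by (auto simp: rtrancl_eq_or_trancl)
  obtain u' where u': "(u, u') \<in> R\<^sup>*" using sink_exists[of u R] by blast
  have "R\<^sup>* `` {v} \<inter> R\<^sup>* `` {u'} = {}"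
  proof (rule ccontr)
    assume "R\<^sup>* `` {v} \<inter> R\<^sup>* `` {u'} \<noteq> {}"
    then obtain w where "(v, w) \<in> R\<^sup>*" "(u', w) \<in> R\<^sup>*" by auto
    hence "(u, v) \<in> R\<^sup>*" using v u' by (meson rtrancl_trans)
    thus False using nu by simp
  qed
  thus ?thesis by blast
qed




abbreviation PM :: "'n::finite measure" where "PM \<equiv> measure_pmf (pmf_of_set UNIV)"

lemma sets_ip: "sets (stream_space (PM::'n::finite measure)) = sets (stream_space (count_space UNIV))"
  by (rule sets_stream_space_cong) simp

lemma space_ip: "space (stream_space (PM::'n::finite measure)) = UNIV"
  by (simp add: space_stream_space)

lemma ps_S: "prob_space (stream_space (PM::'n::finite measure))"
  by (rule prob_space.prob_space_stream_space) (rule prob_space_measure_pmf)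

lemma pred_sets:
  assumes "Measurable.pred (stream_space (count_space UNIV)) P"
  shows "{\<omega>::'a::countable stream. P \<omega>} \<in> sets (stream_space (count_space UNIV))"
  using predE[OF assms] by (simp add: space_stream_space)

lemma emeasure_S:
  assumes "Y \<in> sets (stream_space (PM::'n::finite measure))"
  shows "emeasure (stream_space PM) Y = (\<integral>\<^sup>+t. emeasure (stream_space PM) {x. t ## x \<in> Y} \<partial>PM)"
  using prob_space.emeasure_stream_space[OF prob_space_measure_pmf assms] by (simp add: space_ip)

lemma emeasure_head:
  fixes a :: "'n::finite"
  assumes X: "X \<in> sets (stream_space (count_space UNIV))"
  shows "emeasure (stream_space PM) {\<omega>. shd \<omega> = a \<and> stl \<omega> \<in> X} = ennreal (1 / real CARD('n)) * emeasure (stream_space PM) X"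
proof -
  note [measurable] = X
  have Y: "{\<omega>::'n stream. shd \<omega> = a \<and> stl \<omega> \<in> X} \<in> sets (stream_space (count_space UNIV))" by (rule pred_sets) measurable
  have eq: "{x. t ## x \<in> {\<omega>. shd \<omega> = a \<and> stl \<omega> \<in> X}} = (if t = a then X else {})" for t by auto
  have "emeasure (stream_space PM) {\<omega>. shd \<omega> = a \<and> stl \<omega> \<in> X}
      = (\<integral>\<^sup>+t. emeasure (stream_space PM) {x. t ## x \<in> {\<omega>. shd \<omega> = a \<and> stl \<omega> \<in> X}} \<partial>PM)"
    by (rule emeasure_S) (use Y sets_ip in auto)
  also have "\<dots> = (\<integral>\<^sup>+t. emeasure (stream_space PM) X * indicator {a} t \<partial>PM)"
  proof (rule nn_integral_cong)
    fix t show "emeasure (stream_space PM) {x. t ## x \<in> {\<omega>. shd \<omega> = a \<and> stl \<omega> \<in> X}} = emeasure (stream_space PM) X * indicator {a} t"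
      by (cases "t = a") auto
  qed
  also have "\<dots> = emeasure (stream_space PM) X * emeasure PM {a}"
    by (rule nn_integral_cmult_indicator) simp
  also have "emeasure PM {a} = ennreal (1 / real CARD('n))"
    by (simp add: emeasure_pmf_single pmf_of_set)
  finally show ?thesis by (simp add: mult.commute)
qed

lemma emeasure_tail:
  assumes X: "X \<in> sets (stream_space (count_space UNIV))"
  shows "emeasure (stream_space (PM::'n::finite measure)) {\<omega>. stl \<omega> \<in> X} = emeasure (stream_space PM) X"
proof -
  note [measurable] = X
  have Y: "{\<omega>::'n stream. stl \<omega> \<in> X} \<in> sets (stream_space (count_space UNIV))" by (rule pred_sets) measurable
  have "emeasure (stream_space (PM::'n measure)) {\<omega>. stl \<omega> \<in> X} = (\<integral>\<^sup>+(t::'n). emeasure (stream_space PM) X \<partial>PM)"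
    by (subst emeasure_S) (use Y sets_ip in \<open>auto\<close>)
  also have "\<dots> = emeasure (stream_space PM) X"
    by (simp add: nn_integral_const prob_space.emeasure_space_1[OF prob_space_measure_pmf])
  finally show ?thesis .
qed

lemma emeasure_block:
  "X \<in> sets (stream_space (count_space UNIV)) \<Longrightarrow>
   emeasure (stream_space (PM::'n::finite measure)) {\<omega>. stake (length w) \<omega> = w \<and> sdrop (length w) \<omega> \<in> X}
   = ennreal ((1 / real CARD('n)) ^ length w) * emeasure (stream_space PM) X"
proof (induction w)
  case Nil then show ?case by simp
next
  case (Cons a w)
  note [measurable] = Cons.prems
  have Y: "{\<omega>::'n stream. stake (length w) \<omega> = w \<and> sdrop (length w) \<omega> \<in> X} \<in> sets (stream_space (count_space UNIV))"
    by (rule pred_sets) measurable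
  have "{\<omega>::'n stream. stake (length (a # w)) \<omega> = a # w \<and> sdrop (length (a # w)) \<omega> \<in> X}
       = {\<omega>. shd \<omega> = a \<and> stl \<omega> \<in> {\<omega>. stake (length w) \<omega> = w \<and> sdrop (length w) \<omega> \<in> X}}"
    by auto
  hence "emeasure (stream_space (PM::'n measure)) {\<omega>. stake (length (a # w)) \<omega> = a # w \<and> sdrop (length (a # w)) \<omega> \<in> X}
     = ennreal (1 / real CARD('n)) * (ennreal ((1 / real CARD('n)) ^ length w) * emeasure (stream_space PM) X)"
    using emeasure_head[OF Y, of a] Cons.IH[OF Cons.prems] by simp
  also have "\<dots> = (ennreal (1 / real CARD('n)) * ennreal ((1 / real CARD('n)) ^ length w)) * emeasure (stream_space PM) X"
    by (simp add: mult.assoc)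
  also have "ennreal (1 / real CARD('n)) * ennreal ((1 / real CARD('n)) ^ length w) = ennreal ((1 / real CARD('n)) ^ length (a # w))"
    by (subst ennreal_mult[symmetric]) auto
  finally show ?case .
qed

lemma emeasure_shift:
  "X \<in> sets (stream_space (count_space UNIV)) \<Longrightarrow>
   emeasure (stream_space (PM::'n::finite measure)) {\<omega>. sdrop m \<omega> \<in> X} = emeasure (stream_space PM) X"
proof (induction m arbitrary: X)
  case 0 then show ?case by simp
next
  case (Suc m)
  note [measurable] = Suc.prems
  have Y: "{\<omega>::'n stream. sdrop m \<omega> \<in> X} \<in> sets (stream_space (count_space UNIV))" by (rule pred_sets) measurable
  have "{\<omega>::'n stream. sdrop (Suc m) \<omega> \<in> X} = {\<omega>. stl \<omega> \<in> {\<omega>. sdrop m \<omega> \<in> X}}" by simp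
  thus ?case using emeasure_tail[OF Y] Suc.IH[OF Suc.prems] by simp
qed

lemma never_null:
  "{\<omega>. \<forall>t. stake (length w) (sdrop t \<omega>) \<noteq> w} \<in> null_sets (stream_space (PM::'n::finite measure))"
proof -
  interpret S: prob_space "stream_space (PM::'n measure)" by (rule ps_S)
  define N where "N = {\<omega>::'n stream. \<forall>t. stake (length w) (sdrop t \<omega>) \<noteq> w}"
  define m where "m = length w"
  define c where "c = (1 / real CARD('n)) ^ m"
  have c: "c > 0" unfolding c_def by simp
  have NSc[measurable]: "N \<in> sets (stream_space (count_space UNIV))" unfolding N_def by (rule pred_sets) measurable
  define D where "D = {\<omega>::'n stream. sdrop m \<omega> \<in> N}"
  define C where "C = {\<omega>::'n stream. stake m \<omega> = w \<and> sdrop m \<omega> \<in> N}"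
  have DS: "D \<in> sets (stream_space (count_space UNIV))" unfolding D_def by (rule pred_sets) measurable
  have CS: "C \<in> sets (stream_space (count_space UNIV))" unfolding C_def by (rule pred_sets) measurable
  have NS: "N \<in> sets (stream_space PM)" using sets_ip by auto
  have D': "D \<in> sets (stream_space PM)" using DS sets_ip by auto
  have C': "C \<in> sets (stream_space PM)" using CS sets_ip by auto
  have "N \<subseteq> D - C"
  proof
    fix \<omega> assume "\<omega> \<in> N"
    hence a: "\<forall>t. stake m (sdrop t \<omega>) \<noteq> w" unfolding N_def m_def by simp
    have "sdrop m \<omega> \<in> N" unfolding N_def m_def[symmetric] using a by (simp add: sdrop_add)
    moreover have "stake m \<omega> \<noteq> w" using a[rule_format, of 0] by simp
    ultimately show "\<omega> \<in> D - C" unfolding D_def C_def by simp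
  qed
  hence "S.prob N \<le> S.prob (D - C)" using D' C' by (intro S.finite_measure_mono) auto
  also have "\<dots> = S.prob D - S.prob C"
    using D' C' by (intro S.finite_measure_Diff) (auto simp: C_def D_def)
  also have "S.prob D = S.prob N"
    using emeasure_shift[OF NSc, of m] unfolding D_def
    by (simp add: S.emeasure_eq_measure)
  also have "S.prob C = c * S.prob N"
  proof -
    have "emeasure (stream_space PM) C = ennreal c * emeasure (stream_space PM) N"
      using emeasure_block[OF NSc, of w] unfolding C_def m_def c_def by simp
    thus ?thesis using c by (simp add: S.emeasure_eq_measure ennreal_mult[symmetric])
  qed
  finally have "c * S.prob N \<le> 0" by simp
  hence "S.prob N \<le> 0" using c by (simp add: mult_le_0_iff)
  hence "S.prob N = 0" using measure_nonneg[of "stream_space PM" N] by linarith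
  hence "emeasure (stream_space PM) N = 0" by (simp add: S.emeasure_eq_measure)
  thus ?thesis using NS unfolding N_def by (intro null_setsI) auto
qed




theorem mainTheorem10:
  fixes W :: "'n::finite \<Rightarrow> 'n \<Rightarrow> real" and x0 :: "'n \<Rightarrow> real"
  assumes "row_stochastic W"
    and "\<forall>v. \<not> globally_reachable (G_decisive W) v"
    and "inj x0"
  shows "AE \<omega> in index_process. \<exists>t. disagreement_equilibrium W (traj W x0 \<omega> t)"
proof -
  note rs = assms(1)
  let ?F = "{x::'n \<Rightarrow> real. range x \<subseteq> range x0}"
  have "?F = PiE UNIV (\<lambda>_. range x0)" by (auto simp: PiE_UNIV_domain Pi_def)
  hence fin: "finite ?F" by (simp add: finite_PiE)
  obtain w where w: "\<forall>s\<in>?F. equilibrium W (foldl (step W) s w)"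
    using universal_word[OF rs fin] by blast
  obtain v u' where disj: "(G_decisive W)\<^sup>* `` {v} \<inter> (G_decisive W)\<^sup>* `` {u'} = {}"
    using disjoint_reach[OF assms(2)] by blast
  have ne: "traj W x0 \<omega> t v \<noteq> traj W x0 \<omega> t u'" for \<omega> t
  proof
    assume eq: "traj W x0 \<omega> t v = traj W x0 \<omega> t u'"
    obtain a where a: "a \<in> (G_decisive W)\<^sup>* `` {v}" "traj W x0 \<omega> t v = x0 a"
      using traj_vals[OF rs, of x0 \<omega> t v] by blast
    obtain b where b: "b \<in> (G_decisive W)\<^sup>* `` {u'}" "traj W x0 \<omega> t u' = x0 b"
      using traj_vals[OF rs, of x0 \<omega> t u'] by blast
    have "a = b" using a b eq assms(3) by (simp add: inj_eq)
    thus False using a b disj by blast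
  qed
  have null: "{\<omega>. \<forall>t. stake (length w) (sdrop t \<omega>) \<noteq> w} \<in> null_sets (index_process :: 'n stream measure)"
    unfolding index_process_def by (rule never_null)
  show ?thesis
  proof (rule AE_I'[OF null], safe)
    fix \<omega> t
    assume nde: "\<not> (\<exists>t. disagreement_equilibrium W (traj W x0 \<omega> t))"
      and st: "stake (length w) (sdrop t \<omega>) = w"
    have "traj W x0 \<omega> (t + length w) = foldl (step W) (traj W x0 \<omega> t) w"
      by (rule traj_shift[OF st])
    moreover have "traj W x0 \<omega> t \<in> ?F" using traj_range[OF rs] by blast
    ultimately have "equilibrium W (traj W x0 \<omega> (t + length w))" using w by simp
    hence "disagreement_equilibrium W (traj W x0 \<omega> (t + length w))"
      unfolding disagreement_equilibrium_def using ne by blast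
    thus False using nde by blast
  qed
qed


end
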